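(* For $n\ge1$ let $$\Delta_n(t)=\sum_{k=0}^{n-1}(-1)^k(2k+1)\big(t^k+t^{2n-k}\big)+(-1)^n(2n+1)t^n,$$ the Alexander polynomial of the 2-bridge knot $K([\underbrace{2,\dots,2}_{n},\underbrace{-2,\dots,-2}_{n}])$. Then no zero of $\Delta_n$ has modulus $1$. Moreover: (1) if $n$ is odd, $\Delta_n$ has exactly two real zeros and all other zeros are non-real; (2) if $n$ is even, $\Delta_n$ has no real zeros. *)

theory Defs
  imports Complex_Main "HOL-Computational_Algebra.Polynomial"
begin

definition alex_poly :: "nat \<Rightarrow> 'a::comm_ring_1 poly" where
  "alex_poly n =
     (\<Sum>k<n. smult ((-1)^k * of_nat (2*k+1)) (monom 1 k + monom 1 (2*n-k)))
     + smult ((-1)^n * of_nat (2*n+1)) (monom 1 n)"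

end

theory Submission imports Defs begin

lemma poly_alex: "poly (alex_poly n) (z::'a::comm_ring_1) =
  (\<Sum>k<n. (-1)^k * of_nat (2*k+1) * (z^k + z^(2*n-k))) + (-1)^n * of_nat (2*n+1) * z^n"
  unfolding alex_poly_def by (simp add: poly_sum poly_monom)

lemma S1: "(1+z)^2 * (\<Sum>k<n. (-1)^k * of_nat (2*k+1) * (z::'a::comm_ring_1)^k)
   = 1 - z - of_nat (2*n+1) * (-z)^n + (2*of_nat n - 1) * (-z)^(n+1)"
proof (induction n)
  case 0 then show ?case by (simp add: algebra_simps power2_eq_square)
next
  case (Suc n)
  have "(1+z)^2 * (\<Sum>k<Suc n. (-1)^k * of_nat (2*k+1) * z^k) =
     (1+z)^2 * (\<Sum>k<n. (-1)^k * of_nat (2*k+1) * z^k) + (1+z)^2 * ((-1)^n * of_nat (2*n+1) * z^n)"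
    by (simp add: algebra_simps)
  also have "\<dots> = 1 - z - of_nat (2*n+1) * (-z)^n + (2*of_nat n - 1) * (-z)^(n+1) + (1+z)^2 * (of_nat (2*n+1) * (-z)^n)"
    using Suc by (simp add: power_minus')
  also have "\<dots> = 1 - z - of_nat (2*Suc n+1) * (-z)^Suc n + (2*of_nat (Suc n) - 1) * (-z)^(Suc n+1)"
    by (simp add: algebra_simps power2_eq_square)
  finally show ?case .
qed

lemma S2: "(1+z)^2 * (\<Sum>k<n. (-1)^k * of_nat (2*k+1) * (z::'a::comm_ring_1)^(2*n-k))
   = z^(2*n+2) - z^(2*n+1) - of_nat (2*n+1) * (-1)^n * z^(n+2) - (2*of_nat n - 1) * (-1)^n * z^(n+1)"
proof (induction n)
  case 0 then show ?case by (simp add: algebra_simps power2_eq_square)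
next
  case (Suc n)
  have "(\<Sum>k<Suc n. (-1)^k * of_nat (2*k+1) * z^(2*Suc n-k)) =
     z^2 * (\<Sum>k<n. (-1)^k * of_nat (2*k+1) * z^(2*n-k)) + (-1)^n * of_nat (2*n+1) * z^(n+2)"
  proof -
    have "(\<Sum>k<n. (-1)^k * of_nat (2*k+1) * z^(2*Suc n-k)) = (\<Sum>k<n. z^2 * ((-1)^k * of_nat (2*k+1) * z^(2*n-k)))"
    proof (rule sum.cong)
      fix k assume "k \<in> {..<n}"
      then have "2*Suc n - k = 2 + (2*n-k)" by auto
      then show "(-1)^k * of_nat (2*k+1) * z^(2*Suc n-k) = z^2 * ((-1)^k * of_nat (2*k+1) * z^(2*n-k))"
        by (simp add: power_add algebra_simps power2_eq_square)
    qed simp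
    moreover have "2 * Suc n - n = n + 2" by simp
    ultimately show ?thesis by (simp add: sum_distrib_left)
  qed
  then have "(1+z)^2 * (\<Sum>k<Suc n. (-1)^k * of_nat (2*k+1) * z^(2*Suc n-k)) =
     z^2 * ((1+z)^2 * (\<Sum>k<n. (-1)^k * of_nat (2*k+1) * z^(2*n-k))) + (1+z)^2 * ((-1)^n * of_nat (2*n+1) * z^(n+2))"
    by (simp add: algebra_simps)
  also have "\<dots> = z^2 * (z^(2*n+2) - z^(2*n+1) - of_nat (2*n+1) * (-1)^n * z^(n+2) - (2*of_nat n - 1) * (-1)^n * z^(n+1)) + (1+z)^2 * ((-1)^n * of_nat (2*n+1) * z^(n+2))"
    using Suc by simp
  also have "\<dots> = z^(2*Suc n+2) - z^(2*Suc n+1) - of_nat (2*Suc n+1) * (-1)^Suc n * z^(Suc n+2) - (2*of_nat (Suc n) - 1) * (-1)^Suc n * z^(Suc n+1)"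
    by (simp add: algebra_simps power2_eq_square power_add)
  finally show ?case .
qed

lemma key: "(1+z)^2 * poly (alex_poly n) (z::'a::comm_ring_1) = (1-z)*(1-z^(2*n+1)) + 4*(-1)^n*z^(n+1)"
proof -
  have "(1+z)^2 * poly (alex_poly n) z = (1+z)^2 * (\<Sum>k<n. (-1)^k * of_nat (2*k+1) * z^k)
     + (1+z)^2 * (\<Sum>k<n. (-1)^k * of_nat (2*k+1) * z^(2*n-k)) + (1+z)^2 * ((-1)^n * of_nat (2*n+1) * z^n)"
    by (simp add: poly_alex algebra_simps sum.distrib)
  also have "\<dots> = (1-z)*(1-z^(2*n+1)) + 4*(-1)^n*z^(n+1)"
    unfolding S1 S2 by (simp add: algebra_simps power2_eq_square power_add power_minus')
  finally show ?thesis .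
qed


lemma m1sq: "(-1::'a::comm_ring_1)^k * (-1)^k = 1"
  by (simp add: power_add[symmetric])

lemma poly_m1: "poly (alex_poly n) (-1::'a::comm_ring_1) = of_nat (2*n*n+2*n+1)"
proof -
  have "(\<Sum>k<n. (-1)^k * of_nat (2*k+1) * ((-1::'a)^k + (-1)^(2*n-k))) = (\<Sum>k<n. of_nat (4*k+2))"
  proof (rule sum.cong)
    fix k assume "k \<in> {..<n}"
    then have "2*n-k = k + 2*(n-k)" by auto
    then have "(-1::'a)^(2*n-k) = (-1)^k" by (simp add: power_add power_mult)
    then show "(-1)^k * of_nat (2*k+1) * ((-1::'a)^k + (-1)^(2*n-k)) = of_nat (4*k+2)"
      using m1sq[of k] by (simp add: algebra_simps)
  qed simp
  also have "\<dots> = of_nat (\<Sum>k<n. 4*k+2)" by simp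
  also have "(\<Sum>k<n. 4*k+2) = 2*n*n"
    by (induction n) (auto simp: algebra_simps)
  finally have s: "(\<Sum>k<n. (-1)^k * of_nat (2*k+1) * ((-1::'a)^k + (-1)^(2*n-k))) = of_nat (2*n*n)" .
  have "(-1::'a)^n * of_nat (2*n+1) * (-1)^n = of_nat (2*n+1)" using m1sq[of n] by (simp add: algebra_simps)
  then show ?thesis unfolding poly_alex s by simp
qed

lemma G_sq: "(1-t)*(1-t^(2*n+1)) + 4*(-1)^n*t^(n+1) = (1-(-t)^(n+1))^2 - t*(1-(-t)^n)^2"
  for t :: real
proof -
  define s :: real where "s = (-1)^n"
  have ss: "s*s = 1" unfolding s_def using m1sq[of n] by simp
  have ss2: "\<And>x. s*(s*x) = x" using ss by (metis mult.assoc mult_1)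
  have e1: "(-t)^(n+1) = - s * t^(n+1)" unfolding s_def by (simp add: power_minus')
  have e2: "(-t)^n = s * t^n" unfolding s_def by (simp add: power_minus')
  have p1: "t^(2*n+1) = t*t^n*t^n" "t^(n+1) = t*t^n" by (simp_all add: power_add mult_2)
  show ?thesis unfolding e1 e2 p1 s_def[symmetric]
    by (simp add: power2_eq_square algebra_simps ss ss2)
qed


definition G :: "nat \<Rightarrow> real \<Rightarrow> real" where
  "G n t = (1-t)*(1-t^(2*n+1)) + 4*(-1)^n*t^(n+1)"

lemma G_neg: assumes "t < 0" "t \<noteq> -1" shows "G n t \<noteq> 0"
proof
  assume "G n t = 0"
  then have h: "(1-(-t)^(n+1))^2 + (-t)*(1-(-t)^n)^2 = 0" unfolding G_def G_sq by simp
  have "0 \<le> (1-(-t)^(n+1))^2" by simp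
  moreover have "0 \<le> (-t)*(1-(-t)^n)^2" using assms by (intro mult_nonneg_nonneg) auto
  ultimately have a: "(1-(-t)^(n+1))^2 = 0" and b: "(-t)*(1-(-t)^n)^2 = 0" using h by linarith+
  from b assms have "(-t)^n = 1" by simp
  moreover from a have "(-t)^(n+1) = 1" by simp
  ultimately have "-t = 1" by simp
  then show False using assms by simp
qed

lemma prod_nonneg: fixes t :: real assumes "0 \<le> t" shows "0 \<le> (1-t)*(1-t^m)"
proof (cases "t \<le> 1")
  case True then have "t^m \<le> 1" using power_le_one[OF assms True] by simp
  then show ?thesis using True by simp
next
  case False then have "1 \<le> t^m" by (simp add: one_le_power)
  then show ?thesis using False by (simp add: mult_nonpos_nonpos)
qed

lemma G_even: assumes "even n" "0 \<le> t" shows "G n t > 0"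
proof (cases "t = 0")
  case True then show ?thesis by (simp add: G_def)
next
  case False
  then have "0 < 4*t^(n+1)" using assms by simp
  then show ?thesis using prod_nonneg[OF assms(2), of "2*n+1"] assms by (simp add: G_def)
qed

lemma G_odd_mono: assumes "odd n" "0 \<le> a" "a < b" "b \<le> 1" shows "G n b < G n a"
proof -
  have "(1-b)*(1-b^(2*n+1)) \<le> (1-a)*(1-a^(2*n+1))"
  proof (rule mult_mono)
    show "1 - b^(2*n+1) \<le> 1 - a^(2*n+1)" using assms power_mono[of a b "2*n+1"] by simp
    show "0 \<le> 1 - b^(2*n+1)" using assms power_le_one[of b "2*n+1"] by simp
  qed (use assms in auto)
  moreover have "a^(n+1) < b^(n+1)" using assms power_strict_mono[of a b "n+1"] by simp
  ultimately show ?thesis using assms(1) by (simp add: G_def)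
qed

lemma G_recip: assumes "t > 0" shows "G n t = t^(2*n+2) * G n (1/t)"
proof -
  have e1: "t^(2*n+2) = t * t^(2*n+1)" by simp
  have e2: "t^(2*n+2) = t^(n+1) * t^(n+1)" by (simp add: power_add[symmetric] mult_2)
  have nz: "t^(2*n+2) \<noteq> 0" "t^(n+1) \<noteq> 0" "t^(2*n+1) \<noteq> 0" using assms by auto
  have a: "(1-1/t)*(1-1/t^(2*n+1)) = (t-1)*(t^(2*n+1)-1) / t^(2*n+2)"
    unfolding e1 using assms nz by (simp add: field_simps)
  have b: "(1/t)^(n+1) = t^(n+1) / t^(2*n+2)"
    unfolding e2 using nz by (simp add: field_simps power_one_over)
  have "G n (1/t) = (1-1/t)*(1-1/t^(2*n+1)) + 4*(-1)^n*(1/t)^(n+1)"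
    unfolding G_def by (simp only: power_one_over mult.assoc)
  also have "\<dots> = (t-1)*(t^(2*n+1)-1) / t^(2*n+2) + 4*(-1)^n*(t^(n+1) / t^(2*n+2))"
    unfolding a b ..
  also have "\<dots> = ((t-1)*(t^(2*n+1)-1) + 4*(-1)^n*t^(n+1)) / t^(2*n+2)"
    by (simp only: add_divide_distrib times_divide_eq_right)
  finally have "G n (1/t) = ((t-1)*(t^(2*n+1)-1) + 4*(-1)^n*t^(n+1)) / t^(2*n+2)" .
  then have "t^(2*n+2) * G n (1/t) = (t-1)*(t^(2*n+1)-1) + 4*(-1)^n*t^(n+1)"
    using nz by simp
  also have "\<dots> = G n t" by (simp add: G_def algebra_simps)
  finally show ?thesis by simp
qed

lemma G_odd_root: assumes "odd n" obtains r where "0 < r" "r < 1" "G n r = 0"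
proof -
  have "\<exists>x. 0 \<le> x \<and> x \<le> 1 \<and> G n x = 0"
    by (rule IVT2') (use assms in \<open>auto simp: G_def intro!: continuous_intros\<close>)
  then obtain r where r: "0 \<le> r" "r \<le> 1" "G n r = 0" by blast
  have "r \<noteq> 0" using r by (auto simp: G_def)
  moreover have "r \<noteq> 1" using r assms by (auto simp: G_def)
  ultimately have "0 < r" "r < 1" using r by auto
  then show ?thesis using that r by blast
qed


lemma poly_m1_nz: "poly (alex_poly n) (-1::complex) \<noteq> 0"
proof -
  have "(of_nat (2*n*n+2*n+1)::complex) \<noteq> 0"
    by (metis of_nat_eq_0_iff Suc_eq_plus1 nat.distinct(1))
  then show ?thesis by (subst poly_m1) assumption
qed

lemma norm_lt2: assumes "cmod z = 1" "z \<noteq> -1" shows "cmod (1 - z) < 2"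
proof -
  have h: "(Re z)^2 + (Im z)^2 = 1" using assms(1) by (metis cmod_power2 one_power2)
  have "Re z \<noteq> -1"
  proof
    assume "Re z = -1"
    then have "Im z = 0" using h by simp
    then show False using \<open>Re z = -1\<close> assms(2) by (simp add: complex_eq_iff)
  qed
  moreover have "Re z \<ge> -1" using abs_Re_le_cmod[of z] assms(1) by linarith
  ultimately have "Re z > -1" by simp
  have "(cmod (1-z))^2 = (1 - Re z)^2 + (Im z)^2" by (simp add: cmod_power2)
  also have "\<dots> = 2 - 2 * Re z" using h by (simp add: power2_eq_square algebra_simps)
  also have "\<dots> < 2^2" using \<open>Re z > -1\<close> by simp
  finally show ?thesis by (rule power_less_imp_less_base) simp
qed

lemma unit_circle: assumes "cmod z = 1" shows "poly (alex_poly n) z \<noteq> 0"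
proof (cases "z = -1")
  case True
  then show ?thesis using poly_m1_nz by simp
next
  case False
  show ?thesis
  proof
    assume "poly (alex_poly n) z = 0"
    then have "(1-z)*(1-z^(2*n+1)) = - (4*(-1)^n*z^(n+1))" using key[of z n] by (simp add: eq_neg_iff_add_eq_0)
    then have "cmod ((1-z)*(1-z^(2*n+1))) = 4" by (simp add: norm_mult norm_power assms)
    moreover have "cmod (1-z) < 2" using norm_lt2[OF assms False] .
    moreover have "cmod (1-z^(2*n+1)) \<le> 2"
    proof -
      have c: "cmod (z^(2*n+1)) = 1" using norm_power[of z "2*n+1"] assms by simp
      show ?thesis using norm_triangle_ineq4[of 1 "z^(2*n+1)"] c by simp
    qed
    ultimately show False unfolding norm_mult
      using mult_left_mono[of "cmod (1-z^(2*n+1))" 2 "cmod (1-z)"] norm_ge_zero[of "1-z"] by linarith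
  qed
qed

lemma real_root_iff: "poly (alex_poly n) (complex_of_real t) = 0 \<longleftrightarrow> t \<noteq> -1 \<and> G n t = 0"
proof (cases "t = -1")
  case True
  then show ?thesis using poly_m1_nz by simp
next
  case False
  then have nz: "(1 + complex_of_real t)^2 \<noteq> 0"
    by (metis add.inverse_inverse add_eq_0_iff of_real_1 of_real_eq_iff of_real_minus power_not_zero zero_power2 neg_equal_iff_equal)
  have "(1 + complex_of_real t)^2 * poly (alex_poly n) (complex_of_real t) = complex_of_real (G n t)"
    unfolding key by (simp add: G_def)
  then show ?thesis using nz False by (metis mult_eq_0_iff of_real_eq_0_iff)
qed


lemma odd_roots: assumes "odd n" "0 < r" "r < 1" "G n r = 0"
  shows "t \<noteq> -1 \<and> G n t = 0 \<longleftrightarrow> t = r \<or> t = 1/r"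
proof -
  have uniq: "u = r" if "0 < u" "u \<le> 1" "G n u = 0" for u
  proof (rule ccontr)
    assume "u \<noteq> r"
    then consider "u < r" | "r < u" by linarith
    then show False
    proof cases
      case 1 then show ?thesis using G_odd_mono[OF assms(1), of u r] that assms by simp
    next
      case 2 then show ?thesis using G_odd_mono[OF assms(1), of r u] that assms by simp
    qed
  qed
  have G1r: "G n (1/r) = 0" using G_recip[of "1/r" n] assms by simp
  show ?thesis
  proof
    assume h: "t \<noteq> -1 \<and> G n t = 0"
    consider "t < 0" | "t = 0" | "0 < t" "t \<le> 1" | "1 < t" by linarith
    then show "t = r \<or> t = 1/r"
    proof cases
      case 1 then show ?thesis using G_neg[of t n] h by simp
    next
      case 2 then show ?thesis using h by (simp add: G_def)
    next
      case 3 then show ?thesis using uniq h by simp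
    next
      case 4
      have "G n (1/t) = 0" using G_recip[of t n] 4 h by simp
      then have "1/t = r" using uniq[of "1/t"] 4 by simp
      then show ?thesis by auto
    qed
  next
    assume "t = r \<or> t = 1/r"
    moreover have "1/r > 0" using assms by simp
    then have "1/r \<noteq> -1" by linarith
    ultimately show "t \<noteq> -1 \<and> G n t = 0" using assms G1r by auto
  qed
qed

theorem theoremC4:
  fixes n :: nat
  assumes "n \<ge> 1"
  shows "(\<forall>z::complex. poly (alex_poly n) z = 0 \<longrightarrow> cmod z \<noteq> 1)
       \<and> (odd n \<longrightarrow> card {z::complex. poly (alex_poly n) z = 0 \<and> z \<in> \<real>} = 2)
       \<and> (even n \<longrightarrow> (\<forall>z::complex. poly (alex_poly n) z = 0 \<longrightarrow> z \<notin> \<real>))"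
proof (intro conjI impI allI)
  fix z :: complex
  show "poly (alex_poly n) z = 0 \<Longrightarrow> cmod z \<noteq> 1" using unit_circle by blast
next
  fix z :: complex
  assume ev: "even n" and p: "poly (alex_poly n) z = 0"
  show "z \<notin> \<real>"
  proof
    assume "z \<in> \<real>"
    then obtain t where t: "z = complex_of_real t" by (auto elim: Reals_cases)
    then have h: "t \<noteq> -1 \<and> G n t = 0" using p real_root_iff by simp
    show False
    proof (cases "t < 0")
      case True then show ?thesis using G_neg[of t n] h by simp
    next
      case False then show ?thesis using G_even[OF ev, of t] h by simp
    qed
  qed
next
  assume od: "odd n"
  obtain r where r: "0 < r" "r < 1" "G n r = 0" using G_odd_root[OF od] by blast
  have "{z::complex. poly (alex_poly n) z = 0 \<and> z \<in> \<real>} = {complex_of_real r, complex_of_real (1/r)}"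
  proof (intro set_eqI iffI)
    fix z assume "z \<in> {z::complex. poly (alex_poly n) z = 0 \<and> z \<in> \<real>}"
    then obtain t where t: "z = complex_of_real t" and p: "poly (alex_poly n) z = 0" by (auto elim: Reals_cases)
    then have "t = r \<or> t = 1/r" using odd_roots[OF od r] real_root_iff by simp
    then show "z \<in> {complex_of_real r, complex_of_real (1/r)}" using t by auto
  next
    fix z assume "z \<in> {complex_of_real r, complex_of_real (1/r)}"
    then have zz: "z = complex_of_real r \<or> z = complex_of_real (1/r)" by (simp only: insert_iff empty_iff simp_thms)
    obtain t where t: "z = complex_of_real t" "t = r \<or> t = 1/r"
    proof (cases "z = complex_of_real r")
      case True then show ?thesis using that[of r] by simp
    next
      case False then show ?thesis using that[of "1/r"] zz by fast
    qed
    then have "poly (alex_poly n) z = 0" using odd_roots[OF od r] real_root_iff by simp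
    then show "z \<in> {z::complex. poly (alex_poly n) z = 0 \<and> z \<in> \<real>}" using t by simp
  qed
  moreover have "r \<noteq> 1/r"
  proof -
    have "1 < 1/r" using r by simp
    then show ?thesis using r by linarith
  qed
  then have "complex_of_real r \<noteq> complex_of_real (1/r)" by (simp only: of_real_eq_iff) simp
  ultimately show "card {z::complex. poly (alex_poly n) z = 0 \<and> z \<in> \<real>} = 2"
    by (metis card_2_iff)
qed

end
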